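(* Let $\mathcal{C}\subset\mathcal{V}$ be a nonempty closed convex set and let $x\in\mathcal{C}$. Then \[ P_V\,N^K_{\mathcal{C}}(x)=N^{S_V}_{P_V\mathcal{C}}(P_Vx), \] where $S_V=V^TKV$.
   Context: $n,m,d,q$ are positive integers. $Q$ is an $n\times m$ matrix with entries in $\{0,1,-1\}$, each column having exactly one $1$ and one $-1$, other entries $0$. $\xi_0\in\mathbb{R}^{nd}$ lists node coordinates, with the endpoints of each spring distinct. $\varphi:\mathbb{R}^{nd}\to\mathbb{R}^m$, $\varphi_i(\xi)=\sqrt{\sum_{k=1}^d(\sum_{j}Q_{ji}\xi_{d(j-1)+k})^2}$, and $D_{\xi_0}\varphi$ is its $m\times nd$ Jacobian at $\xi_0$. $R$ is a $q\times nd$ matrix with $\mathrm{rank}\,R=q$, and $\mathrm{Ker}\,(D_{\xi_0}\varphi)\cap\mathrm{Ker}\,R=\{0\}$; also $m-nd+q>0$. $K=\mathrm{diag}(k_1,\dots,k_m)$ with all $k_i>0$. $\mathcal{U}=\{(D_{\xi_0}\varphi)\zeta:R\zeta=0\}$ and $\mathcal{V}=\{K^{-1}\sigma:(D_{\xi_0}\varphi)^T\sigma\in\mathrm{Im}\,R^T\}$ are subspaces of $\mathbb{R}^m$ (they are complementary and orthogonal w.r.t. $(x,y)\mapsto x^TKy$). $U$, $V$ are matrices whose columns form bases of $\mathcal U$, $\mathcal V$ respectively; $P_U=(U^TKU)^{-1}U^TK$, $P_V=(V^TKV)^{-1}V^TK$. For a nonempty closed convex set $\mathcal{D}\subset\mathbb{R}^N$,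 a point $z\in\mathcal D$ and a symmetric positive definite $N\times N$ matrix $S$, $N^S_{\mathcal D}(z)=\{w\in\mathbb{R}^N:w^TS(c-z)\le0\ \forall c\in\mathcal D\}$. $P_V N^K_{\mathcal C}(x)$ denotes the image of the set under the linear map $P_V$, and $P_V\mathcal C$ likewise. *)

theory Defs
  imports "HOL-Analysis.Analysis"
begin

text \<open>Node coordinates live in real^('n \<times> 'd): entry (j,k) is the k-th coordinate of node j
  (this is the paper's coordinate xi_{d(j-1)+k}). Springs are indexed by 'm.\<close>

definition incidence_matrix :: "real^'m^'n \<Rightarrow> bool" where
  "incidence_matrix Q \<longleftrightarrow>
     (\<forall>j i. Q$j$i \<in> {0, 1, -1}) \<and>
     (\<forall>i. card {j. Q$j$i = 1} = 1 \<and> card {j. Q$j$i = -1} = 1)"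

definition distinct_endpoints :: "real^'m^'n \<Rightarrow> real^('n::finite \<times> 'd::finite) \<Rightarrow> bool" where
  "distinct_endpoints Q xi \<longleftrightarrow>
     (\<forall>i j1 j2. Q$j1$i = 1 \<and> Q$j2$i = -1 \<longrightarrow> (\<exists>k. xi$(j1,k) \<noteq> xi$(j2,k)))"

definition spring_length :: "real^'m^'n \<Rightarrow> real^('n::finite \<times> 'd::finite) \<Rightarrow> real^'m" where
  "spring_length Q xi = (\<chi> i. sqrt (\<Sum>k\<in>UNIV. (\<Sum>j\<in>UNIV. Q$j$i * xi$(j,k))^2))"

definition jacobian :: "(real^'a \<Rightarrow> real^'b) \<Rightarrow> real^'a \<Rightarrow> real^'a^'b" where
  "jacobian f x0 = matrix (frechet_derivative f (at x0))"

definition Ucal :: "real^'a^'m \<Rightarrow> real^'a^'q \<Rightarrow> (real^'m) set" where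
  "Ucal D R = {D *v z | z. R *v z = 0}"

definition Vcal :: "real^'a^'m \<Rightarrow> real^'a^'q \<Rightarrow> real^'m^'m \<Rightarrow> (real^'m) set" where
  "Vcal D R K = {matrix_inv K *v s | s. transpose D *v s \<in> range (\<lambda>y. transpose R *v y)}"

definition proj_V :: "real^'r^'m \<Rightarrow> real^'m^'m \<Rightarrow> real^'m^'r" where
  "proj_V V K = matrix_inv (transpose V ** K ** V) ** transpose V ** K"

definition normal_cone :: "real^'N^'N \<Rightarrow> (real^'N) set \<Rightarrow> real^'N \<Rightarrow> (real^'N) set" where
  "normal_cone S D z = {w. \<forall>c\<in>D. w \<bullet> (S *v (c - z)) \<le> 0}"

end

theory Submission
  imports Defs
begin

declare transpose_matrix_vector[simp del]

lemma inner_transpose_mv: "(u::real^'a) \<bullet> (transpose A *v y) = (A *v u) \<bullet> y"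
  by (metis dot_lmul_matrix inner_commute transpose_matrix_vector vector_transpose_matrix transpose_transpose)

lemma lemma1:
  fixes Q :: "real^'m^'n"
    and xi0 :: "real^('n::finite \<times> 'd::finite)"
    and R :: "real^('n \<times> 'd)^'q"
    and k :: "'m \<Rightarrow> real"
    and K :: "real^'m^'m"
    and V :: "real^'r^'m"
    and C :: "(real^'m) set"
    and x :: "real^'m"
  assumes "incidence_matrix Q"
    and "distinct_endpoints Q xi0"
    and "rank R = CARD('q)"
    and "{z. jacobian (spring_length Q) xi0 *v z = 0} \<inter> {z. R *v z = 0} = {0}"
    and "CARD('m) + CARD('q) > CARD('n) * CARD('d)"
    and "\<forall>i. k i > 0"
    and "K = (\<chi> i j. if i = j then k i else 0)"
    and "\<forall>c. V *v c = 0 \<longrightarrow> c = 0"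
    and "range (\<lambda>c. V *v c) = Vcal (jacobian (spring_length Q) xi0) R K"
    and "C \<subseteq> Vcal (jacobian (spring_length Q) xi0) R K"
    and "C \<noteq> {}" and "closed C" and "convex C"
    and "x \<in> C"
  shows "(\<lambda>w. proj_V V K *v w) ` normal_cone K C x
         = normal_cone (transpose V ** K ** V) ((\<lambda>c. proj_V V K *v c) ` C) (proj_V V K *v x)"
proof -
  define S where "S = transpose V ** K ** V"
  define P where "P = proj_V V K"
  have P_def': "P = matrix_inv S ** transpose V ** K" unfolding P_def proj_V_def S_def by simp
  have Ksym: "transpose K = K" using assms(7) by (simp add: transpose_def vec_eq_iff)
  have Ssym: "transpose S = S" unfolding S_def
    by (simp add: matrix_transpose_mul Ksym matrix_mul_assoc)
  have Kv: "K *v y = (\<chi> i. k i * y$i)" for y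
    unfolding assms(7) by (simp add: matrix_vector_mult_def vec_eq_iff if_distrib[where f="\<lambda>z. z * _"] sum.delta cong: if_cong)
  have Kpos: "y \<bullet> (K *v y) = (\<Sum>i\<in>UNIV. k i * (y$i)^2)" for y
    by (simp add: Kv inner_vec_def power2_eq_square mult.commute mult.left_commute)
  have Sinj: "S *v u = 0 \<Longrightarrow> u = 0" for u
  proof -
    assume h: "S *v u = 0"
    let ?y = "V *v u"
    have "u \<bullet> (S *v u) = ?y \<bullet> (K *v ?y)"
      unfolding S_def by (simp add: matrix_vector_mul_assoc[symmetric] inner_transpose_mv)
    hence "(\<Sum>i\<in>UNIV. k i * (?y$i)^2) = 0" using h Kpos by simp
    hence "\<forall>i\<in>UNIV. k i * (?y$i)^2 = 0"
      by (subst (asm) sum_nonneg_eq_0_iff) (auto intro!: mult_nonneg_nonneg simp: less_imp_le[OF assms(6)[rule_format]])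
    hence "?y = 0" using assms(6) by (auto simp: vec_eq_iff) (metis less_irrefl)
    thus "u = 0" using assms(8) by blast
  qed
  have "\<exists>B. B ** S = mat 1" using Sinj matrix_left_invertible_ker by blast
  hence invS: "invertible S" using invertible_left_inverse by blast
  hence "\<exists>A'. S ** A' = mat 1 \<and> A' ** S = mat 1" unfolding invertible_def by blast
  hence SI: "S ** matrix_inv S = mat 1 \<and> matrix_inv S ** S = mat 1"
    unfolding matrix_inv_def by (rule someI_ex)
  have PV: "P ** V = mat 1"
    using SI unfolding P_def' S_def by (simp add: matrix_mul_assoc)
  have PVv: "P *v (V *v e) = e" for e
    by (simp add: matrix_vector_mul_assoc PV)
  have SP: "S ** P = transpose V ** K"
    unfolding P_def' using SI by (metis matrix_mul_assoc matrix_mul_lid)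
  have key: "(P *v w) \<bullet> (S *v d) = w \<bullet> (K *v (V *v d))" for w d
  proof -
    have "(P *v w) \<bullet> (S *v d) = d \<bullet> (transpose S *v (P *v w))"
      by (simp add: inner_transpose_mv inner_commute)
    also have "\<dots> = d \<bullet> (transpose V *v (K *v w))"
      by (simp add: Ssym matrix_vector_mul_assoc SP)
    also have "\<dots> = (V *v d) \<bullet> (K *v w)" by (simp add: inner_transpose_mv)
    also have "\<dots> = w \<bullet> (transpose K *v (V *v d))" by (simp add: inner_transpose_mv inner_commute)
    finally show ?thesis by (simp add: Ksym)
  qed
  have inV: "\<And>c. c \<in> C \<Longrightarrow> \<exists>a. c = V *v a" using assms(9,10) by blast
  obtain b where b: "x = V *v b" using inV assms(14) by blast
  have dif: "c \<in> C \<Longrightarrow> c - x = V *v (P *v c - P *v x) " for c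
  proof -
    assume "c \<in> C" then obtain a where a: "c = V *v a" using inV by blast
    show ?thesis using a b by (simp add: PVv matrix_vector_mult_diff_distrib)
  qed
  show ?thesis unfolding S_def[symmetric] P_def[symmetric]
  proof
    show "(*v) P ` normal_cone K C x \<subseteq> normal_cone S ((*v) P ` C) (P *v x)"
    proof
      fix u assume "u \<in> (*v) P ` normal_cone K C x"
      then obtain w where w: "w \<in> normal_cone K C x" "u = P *v w" by blast
      show "u \<in> normal_cone S ((*v) P ` C) (P *v x)"
        unfolding normal_cone_def
      proof (safe)
        fix c assume c: "c \<in> C"
        have "u \<bullet> (S *v (P *v c - P *v x)) = w \<bullet> (K *v (c - x))"
          using key dif[OF c] w(2) by simp
        also have "\<dots> \<le> 0" using w(1) c unfolding normal_cone_def by blast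
        finally show "u \<bullet> (S *v (P *v c - P *v x)) \<le> 0" .
      qed
    qed
  next
    show "normal_cone S ((*v) P ` C) (P *v x) \<subseteq> (*v) P ` normal_cone K C x"
    proof
      fix u assume u: "u \<in> normal_cone S ((*v) P ` C) (P *v x)"
      have "V *v u \<in> normal_cone K C x"
        unfolding normal_cone_def
      proof (safe)
        fix c assume c: "c \<in> C"
        have "(V *v u) \<bullet> (K *v (c - x)) = u \<bullet> (S *v (P *v c - P *v x))"
          using key[of "V *v u"] dif[OF c] by (simp add: PVv)
        also have "\<dots> \<le> 0" using u c unfolding normal_cone_def by blast
        finally show "(V *v u) \<bullet> (K *v (c - x)) \<le> 0" .
      qed
      moreover have "u = P *v (V *v u)" by (simp add: PVv)
      ultimately show "u \<in> (*v) P ` normal_cone K C x" by blast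
    qed
  qed
qed

end
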